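(* For any $n\in\mathbb{N}$, the monoid $\mathrm{lps}_n$ is finitely presented.
   Context: Let $\mathcal{A}_n=\{1<2<\cdots<n\}$. An lPS tableau is a finite (possibly empty) sequence of nonempty bottom-justified columns of boxes filled with positive integers, such that the entries of each column are strictly decreasing from top to bottom and the bottom entries of the columns form a weakly increasing sequence from left to right. Right insertion of a symbol $a$ into an lPS tableau $B$: if $a$ is greater than or equal to every entry of the bottom row, append a new column consisting of $a$ at the right end; otherwise, let $z$ be the leftmost bottom-row entry with $z>a$ and put $a$ in a new box at the bottom of the column of $z$ (the previous entries of that column move up one box). For $w=w_1\cdots w_k$, $\mathfrak{R}_\ell(w)$ is obtained by starting with the empty tableau and right-inserting $w_1,\dots,w_k$ in order. The monoid $\mathrm{lps}_n$ is the quotient of the free monoid $\mathcal{A}_n^*$ by the congruence $u\equiv v\iff\mathfrak{R}_\ell(u)=\mathfrak{R}_\ell(v)$. *)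

theory Defs
  imports Main
begin

text \<open>An lPS tableau is a list of columns (left to right); each column is a list of
entries from top to bottom, so the bottom entry of a column c is last c.\<close>

fun rins :: "nat list list \<Rightarrow> nat \<Rightarrow> nat list list" where
  "rins [] a = [[a]]"
| "rins (c # cs) a = (if a < last c then (c @ [a]) # cs else c # rins cs a)"

definition lps_tab :: "nat list \<Rightarrow> nat list list" where
  "lps_tab w = foldl rins [] w"

definition lps_equiv :: "nat \<Rightarrow> nat list \<Rightarrow> nat list \<Rightarrow> bool" where
  "lps_equiv n u v \<longleftrightarrow> set u \<subseteq> {1..n} \<and> set v \<subseteq> {1..n} \<and> lps_tab u = lps_tab v"

inductive_set cong_gen :: "('a list \<times> 'a list) set \<Rightarrow> ('a list \<times> 'a list) set"
  for R where
  refl: "(u, u) \<in> cong_gen R"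
| rel: "(u, v) \<in> R \<Longrightarrow> (p @ u @ s, p @ v @ s) \<in> cong_gen R"
| sym: "(u, v) \<in> cong_gen R \<Longrightarrow> (v, u) \<in> cong_gen R"
| trans: "(u, v) \<in> cong_gen R \<Longrightarrow> (v, w) \<in> cong_gen R \<Longrightarrow> (u, w) \<in> cong_gen R"

text \<open>The monoid A*/E (A a set of letters, E an equivalence on words over A that is a
congruence) is finitely presented: there are a finite alphabet B, a finite set of
relations R over B, and an isomorphism B*/R# \<cong> A*/E. The isomorphism is given by the
monoid homomorphism B* \<rightarrow> A*/E sending a letter b to the class of the word g b;
it is required to be surjective with kernel exactly R#.\<close>
definition fin_presented_quot :: "'a set \<Rightarrow> ('a list \<Rightarrow> 'a list \<Rightarrow> bool) \<Rightarrow> bool" where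
  "fin_presented_quot A E \<longleftrightarrow>
     (\<exists>(B :: nat set) (g :: nat \<Rightarrow> 'a list) (R :: (nat list \<times> nat list) set).
        finite B \<and> finite R \<and> R \<subseteq> lists B \<times> lists B \<and>
        (\<forall>b\<in>B. g b \<in> lists A) \<and>
        (\<forall>u\<in>lists B. \<forall>v\<in>lists B.
            (u, v) \<in> cong_gen R \<longleftrightarrow> E (concat (map g u)) (concat (map g v))) \<and>
        (\<forall>w\<in>lists A. \<exists>u\<in>lists B. E w (concat (map g u))))"

end

theory Submission
  imports Defs
begin

definition Rel :: "nat \<Rightarrow> (nat list \<times> nat list) set" where
  "Rel n = {(y # c @ [a], y # a # c) | y c a. 1 \<le> a \<and> a < y \<and> y \<le> n \<and> set c \<subseteq> {y..n} \<and> length c \<le> n}"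

lemma cong_gen_app:
  "(u, v) \<in> cong_gen R \<Longrightarrow> (p @ u @ s, p @ v @ s) \<in> cong_gen R"
proof (induction rule: cong_gen.induct)
  case (refl u) then show ?case by (rule cong_gen.refl)
next
  case (rel u v p' s')
  then show ?case using cong_gen.rel[of u v R "p @ p'" "s' @ s"] by simp
next
  case (sym u v) then show ?case by (blast intro: cong_gen.sym)
next
  case (trans u v w) then show ?case by (metis cong_gen.trans)
qed

lemma cong_gen_app_r: "(u, v) \<in> cong_gen R \<Longrightarrow> (u @ s, v @ s) \<in> cong_gen R"
  using cong_gen_app[of u v R "[]" s] by simp

lemma cong_gen_app_l: "(u, v) \<in> cong_gen R \<Longrightarrow> (p @ u, p @ v) \<in> cong_gen R"
  using cong_gen_app[of u v R p "[]"] by simp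

lemma lps_tab_app: "lps_tab (u @ s) = foldl rins (lps_tab u) s"
  by (simp add: lps_tab_def)

lemma lps_tab_snoc: "lps_tab (u @ [a]) = rins (lps_tab u) a"
  by (simp add: lps_tab_def)

lemma rins_lasts: "set (map last (rins T a)) \<subseteq> set (map last T) \<union> {a}"
  by (induction T a rule: rins.induct) auto

lemma rins_decomp:
  "\<exists>M Rr. rins T y = M @ Rr \<and> M \<noteq> [] \<and> last (last M) = y \<and> (\<forall>d\<in>set M. last d \<le> y)"
proof (induction T y rule: rins.induct)
  case (1 a)
  then show ?case by (rule exI[of _ "[[a]]"]) auto
next
  case (2 c cs a)
  show ?case
  proof (cases "a < last c")
    case True
    then show ?thesis by (intro exI[of _ "[c @ [a]]"] exI[of _ cs]) auto
  next
    case False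
    from "2.IH"[OF False] obtain M Rr where "rins cs a = M @ Rr" "M \<noteq> []" "last (last M) = a"
      "\<forall>d\<in>set M. last d \<le> a" by blast
    with False show ?thesis by (intro exI[of _ "c # M"] exI[of _ Rr]) auto
  qed
qed

lemma rins_pref_big:
  "\<forall>d\<in>set M. \<not> c < last d \<Longrightarrow> rins (M @ Rr) c = M @ rins Rr c"
  by (induction M) auto

lemma foldl_pref_big:
  "\<forall>d\<in>set M. last d \<le> y \<Longrightarrow> \<forall>c\<in>set w. y \<le> c \<Longrightarrow>
   foldl rins (M @ Rr) w = M @ foldl rins Rr w"
proof (induction w arbitrary: Rr)
  case Nil then show ?case by simp
next
  case (Cons c w)
  have "rins (M @ Rr) c = M @ rins Rr c"
    proof (rule rins_pref_big, rule ballI)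
    fix d assume "d \<in> set M"
    then have "last d \<le> y" using Cons.prems(1) by blast
    moreover have "y \<le> c" using Cons.prems(2) by simp
    ultimately show "\<not> c < last d" by simp
  qed
  then show ?case using Cons by simp
qed

lemma rins_pref_small:
  "\<exists>d\<in>set M. a < last d \<Longrightarrow> rins (M @ Rr) a = rins M a @ Rr"
  by (induction M) auto

lemma rel_sound:
  assumes "a < y" "\<forall>c\<in>set w. y \<le> c"
  shows "lps_tab (p @ y # w @ [a]) = lps_tab (p @ y # a # w)"
proof -
  obtain M Rr where d: "rins (lps_tab p) y = M @ Rr" "M \<noteq> []" "last (last M) = y"
    "\<forall>d\<in>set M. last d \<le> y" using rins_decomp by blast
  have ex: "\<exists>d\<in>set M. a < last d" using d(2,3) assms(1) by (intro bexI[of _ "last M"]) auto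
  have "lps_tab (p @ y # w @ [a]) = rins (foldl rins (M @ Rr) w) a"
    using d(1) by (simp add: lps_tab_def)
  also have "\<dots> = rins M a @ foldl rins Rr w"
    using foldl_pref_big[OF d(4) assms(2)] rins_pref_small[OF ex] by simp
  finally have L: "lps_tab (p @ y # w @ [a]) = rins M a @ foldl rins Rr w" .
  have M': "\<forall>d\<in>set (rins M a). last d \<le> y"
  proof
    fix d assume "d \<in> set (rins M a)"
    then have "last d \<in> set (map last M) \<union> {a}" using rins_lasts[of M a] by auto
    then show "last d \<le> y" using d(4) assms(1) by auto
  qed
  have "lps_tab (p @ y # a # w) = foldl rins (rins (M @ Rr) a) w"
    using d(1) by (simp add: lps_tab_def)
  also have "\<dots> = rins M a @ foldl rins Rr w"
    using rins_pref_small[OF ex] foldl_pref_big[OF M' assms(2)] by simp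
  finally show ?thesis using L by simp
qed

lemma cong_sound:
  assumes "(u, v) \<in> cong_gen (Rel n)"
  shows "lps_tab u = lps_tab v"
  using assms
proof (induction rule: cong_gen.induct)
  case (rel u v p s)
  then obtain y c a where uv: "u = y # c @ [a]" "v = y # a # c" "a < y" "set c \<subseteq> {y..n}"
    unfolding Rel_def by blast
  have "\<forall>x\<in>set c. y \<le> x" using uv(4) by auto
  then have "lps_tab (p @ u) = lps_tab (p @ v)"
    using rel_sound[of a y c p] uv(1,2,3) by simp
  then show ?case by (metis append_assoc lps_tab_app)
qed auto

definition inv :: "nat \<Rightarrow> nat list list \<Rightarrow> bool" where
  "inv n T \<longleftrightarrow> (\<forall>c\<in>set T. c \<noteq> [] \<and> sorted_wrt (>) c \<and> set c \<subseteq> {1..n}) \<and> sorted (map last T)"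

lemma sorted_wrt_last:
  assumes "sorted_wrt (>) (c::nat list)" "c \<noteq> []" "x \<in> set c"
  shows "last c \<le> x"
  using assms
proof (induction c)
  case Nil then show ?case by simp
next
  case (Cons b c)
  show ?case
  proof (cases "c = []")
    case True then show ?thesis using Cons.prems by simp
  next
    case False
    have lc: "last (b # c) = last c" using False by simp
    have "last c \<in> set c" using False by simp
    then have bl: "last c < b" using Cons.prems(1) by simp
    show ?thesis
    proof (cases "x = b")
      case True then show ?thesis using lc bl by simp
    next
      case False
      then have "x \<in> set c" using Cons.prems(3) by simp
      moreover have "sorted_wrt (>) c" using Cons.prems(1) by simp
      ultimately show ?thesis using Cons.IH \<open>c \<noteq> []\<close> lc by simp
    qed
  qed
qed

lemma inv_rins:
  "inv n T \<Longrightarrow> a \<in> {1..n} \<Longrightarrow> inv n (rins T a)"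
proof (induction T a rule: rins.induct)
  case (1 a) then show ?case by (simp add: inv_def)
next
  case (2 c cs a)
  have cp: "c \<noteq> []" "sorted_wrt (>) c" "set c \<subseteq> {1..n}" using 2(2) by (simp_all add: inv_def)
  have csp: "\<forall>d\<in>set cs. d \<noteq> [] \<and> sorted_wrt (>) d \<and> set d \<subseteq> {1..n}"
    using 2(2) by (simp add: inv_def)
  have srt: "sorted (last c # map last cs)" using 2(2) by (simp add: inv_def)
  have ic: "inv n cs" using 2(2) by (simp add: inv_def)
  show ?case
  proof (cases "a < last c")
    case True
    have ax: "\<forall>x\<in>set c. a < x"
    proof
      fix x assume "x \<in> set c"
      then have "last c \<le> x" using sorted_wrt_last[OF cp(2,1)] by blast
      then show "a < x" using True by simp
    qed
    then have s1: "sorted_wrt (>) (c @ [a])" using cp(2) by (simp add: sorted_wrt_append)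
    have s2: "sorted (a # map last cs)" using True srt by (simp, fastforce)
    have "set (c @ [a]) \<subseteq> {1..n}" using cp(3) 2(3) by simp
    then show ?thesis using True s1 s2 csp by (simp add: inv_def)
  next
    case False
    have ih: "inv n (rins cs a)" by (rule 2(1)[OF False ic 2(3)])
    have "\<forall>z\<in>set (map last (rins cs a)). last c \<le> z"
    proof
      fix z assume "z \<in> set (map last (rins cs a))"
      then have "z \<in> set (map last cs) \<or> z = a" using rins_lasts[of cs a] by blast
      then show "last c \<le> z" using srt False by auto
    qed
    then have "sorted (last c # map last (rins cs a))" using ih by (simp add: inv_def)
    then show ?thesis using False ih cp by (simp add: inv_def)
  qed
qed

lemma inv_tab: "set w \<subseteq> {1..n} \<Longrightarrow> inv n (lps_tab w)"
proof (induction w rule: rev_induct)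
  case Nil then show ?case by (simp add: inv_def lps_tab_def)
next
  case (snoc a w) then show ?case by (simp add: lps_tab_snoc inv_rins)
qed

lemma col_len:
  assumes "sorted_wrt (>) (c::nat list)" "set c \<subseteq> {1..n}"
  shows "length c \<le> n"
proof -
  have "distinct c" using assms(1) by (induction c) auto
  then have "length c = card (set c)" by (simp add: distinct_card)
  also have "\<dots> \<le> card {1..n}" using assms(2) by (intro card_mono) auto
  finally show ?thesis by simp
qed

lemma last_concat:
  assumes "\<forall>d\<in>set ds. d \<noteq> []" "ds \<noteq> []"
  shows "last (y # concat ds) = last (last ds)"
  using assms by (induction ds) auto

lemma move_left:
  assumes "\<forall>d\<in>set cs. d \<noteq> [] \<and> sorted_wrt (>) d \<and> set d \<subseteq> {1..n}"
    "sorted (y # map last cs)" "1 \<le> a" "a < y"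
  shows "(y # concat cs @ [a], y # a # concat cs) \<in> cong_gen (Rel n)"
  using assms
proof (induction cs rule: rev_induct)
  case Nil then show ?case by (simp add: cong_gen.refl)
next
  case (snoc c ds)
  define y' where "y' = last (y # concat ds)"
  have y'ge: "y \<le> y'"
  proof (cases "ds = []")
    case True then show ?thesis by (simp add: y'_def)
  next
    case False
    then have "y' = last (last ds)" using snoc.prems(1) last_concat[of ds y] by (simp add: y'_def)
    moreover have "last ds \<in> set ds" using False by simp
    ultimately show ?thesis using snoc.prems(2) by (auto simp: sorted_append)
  qed
  have y'c: "y' \<le> last c"
  proof (cases "ds = []")
    case True then show ?thesis using snoc.prems(2) by (simp add: y'_def)
  next
    case False
    then have "y' = last (last ds)" using snoc.prems(1) last_concat[of ds y] by (simp add: y'_def)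
    moreover have "last ds \<in> set ds" using False by simp
    ultimately show ?thesis using snoc.prems(2) by (auto simp: sorted_append)
  qed
  have cprops: "c \<noteq> []" "sorted_wrt (>) c" "set c \<subseteq> {1..n}" using snoc.prems(1) by auto
  have cge: "set c \<subseteq> {y'..n}"
  proof
    fix x assume x: "x \<in> set c"
    then have "last c \<le> x" using sorted_wrt_last[OF cprops(2,1)] by blast
    moreover have "x \<le> n" using x cprops(3) by auto
    ultimately show "x \<in> {y'..n}" using y'c by simp
  qed
  have "last c \<in> set c" using cprops(1) by simp
  then have "last c \<le> n" using cprops(3) by auto
  then have "y' \<le> n" using y'c by simp
  have lenc: "length c \<le> n" using col_len cprops by blast
  obtain q where q: "y # concat ds = q @ [y']" unfolding y'_def
    by (metis append_butlast_last_id list.distinct(1))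
  have r: "(y' # c @ [a], y' # a # c) \<in> Rel n" unfolding Rel_def
    using snoc.prems(3,4) y'ge \<open>y' \<le> n\<close> cge lenc by auto
  have s1: "(y # concat (ds @ [c]) @ [a], y # concat ds @ [a] @ c) \<in> cong_gen (Rel n)"
  proof -
    have e1: "y # concat (ds @ [c]) @ [a] = q @ y' # c @ [a]"
    proof -
      have "y # concat (ds @ [c]) @ [a] = (y # concat ds) @ c @ [a]" by simp
      also have "\<dots> = q @ y' # c @ [a]" using q by simp
      finally show ?thesis .
    qed
    have e2: "y # concat ds @ [a] @ c = q @ y' # a # c"
    proof -
      have "y # concat ds @ [a] @ c = (y # concat ds) @ a # c" by simp
      also have "\<dots> = q @ y' # a # c" using q by simp
      finally show ?thesis .
    qed
    show ?thesis using cong_gen.rel[OF r, of q "[]"] unfolding e1 e2 by simp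
  qed
  have p1: "\<forall>d\<in>set ds. d \<noteq> [] \<and> sorted_wrt (>) d \<and> set d \<subseteq> {1..n}"
    using snoc.prems(1) by simp
  have p2: "sorted (y # map last ds)" using snoc.prems(2) by (simp add: sorted_append)
  have ih: "(y # concat ds @ [a], y # a # concat ds) \<in> cong_gen (Rel n)"
    by (rule snoc.IH[OF p1 p2 snoc.prems(3,4)])
  have s2: "(y # concat ds @ [a] @ c, y # a # concat ds @ c) \<in> cong_gen (Rel n)"
    using cong_gen_app_r[OF ih, of c] by simp
  show ?case using cong_gen.trans[OF s1 s2] by simp
qed

lemma step:
  "inv n T \<Longrightarrow> a \<in> {1..n} \<Longrightarrow> (concat T @ [a], concat (rins T a)) \<in> cong_gen (Rel n)"
proof (induction T a rule: rins.induct)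
  case (1 a) then show ?case by (simp add: cong_gen.refl)
next
  case (2 c cs a)
  show ?case
  proof (cases "a < last c")
    case True
    have cne: "c \<noteq> []" using 2(2) by (simp add: inv_def)
    have mv: "(last c # concat cs @ [a], last c # a # concat cs) \<in> cong_gen (Rel n)"
      using 2(2,3) True by (intro move_left) (auto simp: inv_def)
    obtain c' x where cx: "c = c' @ [x]" using cne by (metis rev_exhaust)
    from cong_gen_app_l[OF mv, of c'] cx True show ?thesis by simp
  next
    case False
    have ic: "inv n cs" using 2(2) by (simp add: inv_def)
    have "(concat cs @ [a], concat (rins cs a)) \<in> cong_gen (Rel n)"
      by (rule 2(1)[OF False ic 2(3)])
    from cong_gen_app_l[OF this, of c] False show ?thesis by simp
  qed
qed

lemma normal:
  "set w \<subseteq> {1..n} \<Longrightarrow> (w, concat (lps_tab w)) \<in> cong_gen (Rel n)"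
proof (induction w rule: rev_induct)
  case Nil then show ?case by (simp add: lps_tab_def cong_gen.refl)
next
  case (snoc a w)
  have "(w @ [a], concat (lps_tab w) @ [a]) \<in> cong_gen (Rel n)"
  proof -
    have "set w \<subseteq> {1..n}" using snoc.prems by simp
    then have "(w, concat (lps_tab w)) \<in> cong_gen (Rel n)" by (rule snoc.IH)
    then show ?thesis by (rule cong_gen_app_r)
  qed
  moreover have "(concat (lps_tab w) @ [a], concat (lps_tab (w @ [a]))) \<in> cong_gen (Rel n)"
    using step[OF inv_tab] snoc.prems by (simp add: lps_tab_snoc)
  ultimately show ?case by (metis cong_gen.trans)
qed

lemma Rel_sub:
  assumes "(u, v) \<in> Rel n"
  shows "set u \<subseteq> {1..n} \<and> set v \<subseteq> {1..n} \<and> length u \<le> n + 2 \<and> length v \<le> n + 2"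
proof -
  obtain y c a where uv: "u = y # c @ [a]" "v = y # a # c" "1 \<le> a" "a < y" "y \<le> n"
    "set c \<subseteq> {y..n}" "length c \<le> n" using assms unfolding Rel_def by blast
  have "{y..n} \<subseteq> {1..n}" using uv(3,4) by auto
  then have "set c \<subseteq> {1..n}" using uv(6) by blast
  then show ?thesis using uv by auto
qed

lemma Rel_finite: "finite (Rel n)"
proof -
  have "Rel n \<subseteq> {xs. set xs \<subseteq> {1..n} \<and> length xs \<le> n + 2} \<times> {xs. set xs \<subseteq> {1..n} \<and> length xs \<le> n + 2}"
  proof
    fix p assume "p \<in> Rel n"
    then obtain u v where p: "p = (u, v)" "(u, v) \<in> Rel n" by (cases p) auto
    from Rel_sub[OF p(2)] show "p \<in> {xs. set xs \<subseteq> {1..n} \<and> length xs \<le> n + 2} \<times> {xs. set xs \<subseteq> {1..n} \<and> length xs \<le> n + 2}"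
      using p(1) by simp
  qed
  moreover have "finite {xs. set xs \<subseteq> {1..n::nat} \<and> length xs \<le> n + 2}"
    by (rule finite_lists_length_le) simp
  ultimately show ?thesis by (meson finite_SigmaI finite_subset)
qed

lemma concat_single: "concat (map (\<lambda>b. [b]) u) = u"
  by (induction u) auto

theorem proposition3p24:
  fixes n :: nat
  shows "fin_presented_quot {1..n} (lps_equiv n)"
  unfolding fin_presented_quot_def
proof (intro exI[of _ "{1..n}"] exI[of _ "\<lambda>b. [b]"] exI[of _ "Rel n"] conjI ballI)
  show "finite {1..n::nat}" by simp
  show "finite (Rel n)" by (rule Rel_finite)
  show "Rel n \<subseteq> lists {1..n} \<times> lists {1..n}"
  proof
    fix p assume "p \<in> Rel n"
    then obtain u v where p: "p = (u, v)" "(u, v) \<in> Rel n" by (cases p) auto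
    from Rel_sub[OF p(2)] show "p \<in> lists {1..n} \<times> lists {1..n}"
      using p(1) by (simp add: in_lists_conv_set subset_iff)
  qed
  show "\<And>b. b \<in> {1..n} \<Longrightarrow> [b] \<in> lists {1..n}" by simp
  show "\<And>w. w \<in> lists {1..n} \<Longrightarrow> \<exists>u\<in>lists {1..n}. lps_equiv n w (concat (map (\<lambda>b. [b]) u))"
  proof -
    fix w assume w: "w \<in> lists {1..n::nat}"
    have "lps_equiv n w (concat (map (\<lambda>b. [b]) w))"
      using w by (simp add: concat_single lps_equiv_def in_lists_conv_set subset_iff)
    then show "\<exists>u\<in>lists {1..n}. lps_equiv n w (concat (map (\<lambda>b. [b]) u))" using w by blast
  qed
  fix u v assume uv: "u \<in> lists {1..n}" "v \<in> lists {1..n}"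
  show "((u, v) \<in> cong_gen (Rel n)) = lps_equiv n (concat (map (\<lambda>b. [b]) u)) (concat (map (\<lambda>b. [b]) v))"
  proof
    assume "(u, v) \<in> cong_gen (Rel n)"
    then show "lps_equiv n (concat (map (\<lambda>b. [b]) u)) (concat (map (\<lambda>b. [b]) v))"
    proof -
      have "lps_tab u = lps_tab v" by (rule cong_sound) fact
      then show ?thesis using uv by (simp add: concat_single lps_equiv_def in_lists_conv_set subset_iff)
    qed
  next
    assume "lps_equiv n (concat (map (\<lambda>b. [b]) u)) (concat (map (\<lambda>b. [b]) v))"
    then have e: "lps_tab u = lps_tab v" by (simp add: concat_single lps_equiv_def)
    have su: "set u \<subseteq> {1..n}" using uv(1) by (simp add: in_lists_conv_set subset_iff)
    have sv: "set v \<subseteq> {1..n}" using uv(2) by (simp add: in_lists_conv_set subset_iff)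
    have 1: "(u, concat (lps_tab u)) \<in> cong_gen (Rel n)" using normal[OF su] .
    have 2: "(concat (lps_tab u), v) \<in> cong_gen (Rel n)" using cong_gen.sym[OF normal[OF sv]] e by simp
    show "(u, v) \<in> cong_gen (Rel n)" by (rule cong_gen.trans[OF 1 2])
  qed
qed

end
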